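(* Let $q\in\mathbb{C}$, $|q|<1$, $\mathbf{s}=(s_1,\dots,s_d)\in\mathbb{N}^d$, $w=|\mathbf{s}|$. Define the power series $F_{\mathrm{I}}(t)=\mathbf{R}^{s_1-1}\mathbf{P}[\mathbf{y}\,\mathbf{R}^{s_2-1}\mathbf{P}[\mathbf{y}\cdots\mathbf{R}^{s_d-1}\mathbf{P}[\mathbf{y}]\cdots]](t)$, $F_{\mathrm{II}}(t)=\mathbf{R}^{s_1}[\mathbf{y}\,\mathbf{R}^{s_2}[\mathbf{y}\cdots\mathbf{R}^{s_d}[\mathbf{y}]\cdots]](t)$, $F_{\mathrm{III}}(t)=\mathbf{P}^{s_1-1}\mathbf{R}[\mathbf{y}\,\mathbf{P}^{s_2}[\mathbf{y}\cdots\mathbf{P}^{s_d}[\mathbf{y}]\cdots]](t)$, $F_{\mathrm{IV}}(t)=\mathbf{R}^{s_1-1}\mathbf{P}[\mathbf{y}\,\mathbf{R}^{s_2}[\mathbf{y}\cdots\mathbf{R}^{s_d}[\mathbf{y}]\cdots]](t)$. Then $\mathfrak{z}_q^{\mathfrak{t}}[\mathbf{s}]=F_{\mathfrak{t}}(1)$ and $\zeta_q^{\mathfrak{t}}[\mathbf{s}]=(1-q)^wF_{\mathfrak{t}}(1)$ for $\mathfrak{t}=\mathrm{II},\mathrm{III}$, and also for $\mathfrak{t}=\mathrm{I},\mathrm{IV}$ when $s_1\ge2$. Moreover, the analogous statements hold for the regularized values of types $\widetilde{\mathrm{I}}$ and $\widetilde{\mathrm{IV}}$: in $F_{\mathrm{I}}$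 one may replace any of the operator blocks $\mathbf{R}^{s_j-1}\mathbf{P}$ by a single $\mathbf{R}$, and in $F_{\mathrm{IV}}$ one may replace the block $\mathbf{R}^{s_1-1}\mathbf{P}$ by a single $\mathbf{R}$; the value at $t=1$ then equals $\mathfrak{z}_q^{\mathbf{t}}[\mathbf{s}']$ where at each replaced position $j$ the entry becomes $(t_j,s'_j)=(1,1)$ and the other entries $(t_j,s'_j)$ are as for type I (resp. IV).
   Context: $\mathfrak{z}_q^{\mathbf{t}}[\mathbf{s}]=\sum_{k_1>\dots>k_d>0}\prod_j\frac{q^{k_jt_j}}{(1-q^{k_j})^{s_j}}$, $\zeta_q^{\mathbf{t}}[\mathbf{s}]=(1-q)^{|\mathbf{s}|}\mathfrak{z}_q^{\mathbf{t}}[\mathbf{s}]$. Types: $\mathfrak{z}_q^{\mathrm{I}}[\mathbf{s}]=\mathfrak{z}_q^{(s_1-1,\dots,s_d-1)}[\mathbf{s}]$, $\mathfrak{z}_q^{\mathrm{II}}[\mathbf{s}]=\mathfrak{z}_q^{(s_1,\dots,s_d)}[\mathbf{s}]$, $\mathfrak{z}_q^{\mathrm{III}}[\mathbf{s}]=\mathfrak{z}_q^{(1,0,\dots,0)}[\mathbf{s}]$, $\mathfrak{z}_q^{\mathrm{IV}}[\mathbf{s}]=\mathfrak{z}_q^{(s_1-1,s_2,\dots,s_d)}[\mathbf{s}]$, similarly for $\zeta_q$. Operators on power series in $t$ without constant term: $\mathbf{P}[f](t)=\sum_{k\ge0}f(q^kt)$, $\mathbf{R}[f](t)=\sum_{k\ge1}f(q^kt)$,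 powers are compositions; $\mathbf{y}$ is multiplication by $\mathbf{y}(t)=t/(1-t)$ (innermost: the function itself). *)

theory Defs
  imports "HOL-Analysis.Analysis"
begin

text \<open>Multiple q-zeta values with general numerator exponents t = (t_1,...,t_d):
  sum over k_1 > ... > k_d > 0 (index j of a list is position j+1).\<close>
definition qmzv_frak :: "complex \<Rightarrow> nat list \<Rightarrow> nat list \<Rightarrow> complex" where
  "qmzv_frak q t s =
     infsum (\<lambda>ks. \<Prod>j<length s. q ^ (ks ! j * t ! j) / (1 - q ^ (ks ! j)) ^ (s ! j))
       {ks. length ks = length s \<and> sorted_wrt (>) ks \<and> (\<forall>k\<in>set ks. 0 < k)}"

definition qmzv :: "complex \<Rightarrow> nat list \<Rightarrow> nat list \<Rightarrow> complex" where
  "qmzv q t s = (1 - q) ^ sum_list s * qmzv_frak q t s"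

definition tI :: "nat list \<Rightarrow> nat list" where "tI s = map (\<lambda>sj. sj - 1) s"
definition tII :: "nat list \<Rightarrow> nat list" where "tII s = s"
definition tIII :: "nat list \<Rightarrow> nat list" where "tIII s = 1 # replicate (length s - 1) 0"
definition tIV :: "nat list \<Rightarrow> nat list" where "tIV s = (hd s - 1) # tl s"

definition Pop :: "complex \<Rightarrow> (complex \<Rightarrow> complex) \<Rightarrow> complex \<Rightarrow> complex" where
  "Pop q f t = (\<Sum>k. f (q ^ k * t))"
definition Rop :: "complex \<Rightarrow> (complex \<Rightarrow> complex) \<Rightarrow> complex \<Rightarrow> complex" where
  "Rop q f t = (\<Sum>k. f (q ^ Suc k * t))"
definition yfun :: "complex \<Rightarrow> complex" where "yfun t = t / (1 - t)"

text \<open>nest [op_1,...,op_d] = op_1[y op_2[y ... op_d[y] ...]]\<close>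
fun nest :: "((complex \<Rightarrow> complex) \<Rightarrow> complex \<Rightarrow> complex) list \<Rightarrow> complex \<Rightarrow> complex" where
  "nest [] = (\<lambda>t. 1)"
| "nest (op # ops) = op (\<lambda>t. yfun t * nest ops t)"

definition FI :: "complex \<Rightarrow> nat list \<Rightarrow> complex \<Rightarrow> complex" where
  "FI q s = nest (map (\<lambda>sj. (Rop q ^^ (sj - 1)) \<circ> Pop q) s)"
definition FII :: "complex \<Rightarrow> nat list \<Rightarrow> complex \<Rightarrow> complex" where
  "FII q s = nest (map (\<lambda>sj. Rop q ^^ sj) s)"
definition FIII :: "complex \<Rightarrow> nat list \<Rightarrow> complex \<Rightarrow> complex" where
  "FIII q s = nest (((Pop q ^^ (hd s - 1)) \<circ> Rop q) # map (\<lambda>sj. Pop q ^^ sj) (tl s))"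
definition FIV :: "complex \<Rightarrow> nat list \<Rightarrow> complex \<Rightarrow> complex" where
  "FIV q s = nest (((Rop q ^^ (hd s - 1)) \<circ> Pop q) # map (\<lambda>sj. Rop q ^^ sj) (tl s))"

text \<open>Regularized type I~: the blocks at (0-based) positions in J are replaced by a single R.\<close>
definition FIreg :: "complex \<Rightarrow> nat set \<Rightarrow> nat list \<Rightarrow> complex \<Rightarrow> complex" where
  "FIreg q J s = nest (map (\<lambda>j. if j \<in> J then Rop q else (Rop q ^^ (s ! j - 1)) \<circ> Pop q)
                        [0..<length s])"
definition sIreg :: "nat set \<Rightarrow> nat list \<Rightarrow> nat list" where
  "sIreg J s = map (\<lambda>j. if j \<in> J then 1 else s ! j) [0..<length s]"
definition tIreg :: "nat set \<Rightarrow> nat list \<Rightarrow> nat list" where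
  "tIreg J s = map (\<lambda>j. if j \<in> J then 1 else s ! j - 1) [0..<length s]"

definition FIVreg :: "complex \<Rightarrow> nat list \<Rightarrow> complex \<Rightarrow> complex" where
  "FIVreg q s = nest (Rop q # map (\<lambda>sj. Rop q ^^ sj) (tl s))"

end

theory Submission
  imports Defs begin

lemma geom_has_sum:
  fixes z :: "'a :: {real_normed_field, banach}"
  assumes "norm z < 1"
  shows "((\<lambda>k. z ^ k) has_sum (1 / (1 - z))) UNIV"
proof (rule norm_summable_imp_has_sum)
  show "summable (\<lambda>n. norm (z ^ n))" unfolding norm_power
    using assms by (intro summable_geometric) simp
  show "(\<lambda>k. z ^ k) sums (1 / (1 - z))" using geometric_sums[OF assms] by simp
qed

lemma shift:
  fixes q :: complex and b :: "nat list \<Rightarrow> complex"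
  assumes q: "norm q < 1" and K: "\<forall>x\<in>X. 1 \<le> K x"
  and h: "\<forall>k. ((\<lambda>x. b x * q^((m+k) * K x)) has_sum f (q^(m+k))) X"
  shows "((\<lambda>x. b x * q^(m*K x) / (1 - q^K x)) has_sum (\<Sum>k. f (q^(m+k)))) X"
proof -
  define g where "g k x = b x * q^((m+k)*K x)" for k x
  have gk: "g k x = (b x * q^(m*K x)) * (q^K x)^k" for k x
    unfolding g_def by (simp add: power_add power_mult[symmetric] algebra_simps)
  have nqK: "norm q ^ K x \<le> norm q" if "x \<in> X" for x
    using K that q by (metis norm_ge_zero order_less_imp_le power_decreasing power_one_right)
  have nq: "norm (q^K x) < 1" if "x \<in> X" for x
    using nqK[OF that] q by (simp add: norm_power)
  have inner: "((\<lambda>k. g k x) has_sum (b x * q^(m*K x) / (1 - q^K x))) UNIV" if "x \<in> X" for x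
    unfolding gk using has_sum_cmult_right[OF geom_has_sum[OF nq[OF that]], of "b x * q^(m*K x)"]
    by simp
  have innern: "((\<lambda>k. norm (g k x)) has_sum (norm (b x * q^(m*K x)) / (1 - norm q ^ K x))) UNIV"
    if "x \<in> X" for x
  proof -
    have "norm (norm q ^ K x) < 1" using nq[OF that] by (simp add: norm_power)
    from has_sum_cmult_right[OF geom_has_sum[OF this], of "norm (b x * q^(m*K x))"]
    show ?thesis unfolding gk by (simp add: norm_mult norm_power)
  qed
  have s0: "(\<lambda>x. b x * q^(m*K x)) summable_on X"
    using h[rule_format, of 0] by (auto simp: summable_on_def)
  hence s0n: "(\<lambda>x. norm (b x * q^(m*K x))) summable_on X"
    using summable_on_iff_abs_summable_on_complex[THEN iffD1] by blast
  have bnd: "(\<lambda>x. norm (b x * q^(m*K x)) / (1 - norm q ^ K x)) summable_on X"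
  proof (rule summable_on_comparison_test)
    show "(\<lambda>x. norm (b x * q^(m*K x)) * (1 / (1 - norm q))) summable_on X"
      using summable_on_cmult_left[OF s0n] .
    fix x assume x: "x \<in> X"
    have "1 - norm q \<le> 1 - norm q ^ K x" using nqK[OF x] by simp
    moreover have "0 < 1 - norm q" using q by simp
    ultimately show "norm (b x * q^(m*K x)) / (1 - norm q ^ K x) \<le> norm (b x * q^(m*K x)) * (1 / (1 - norm q))"
      by (simp add: divide_simps mult_left_mono)
    have "norm q ^ K x < 1" using nq[OF x] by (simp add: norm_power)
    then show "0 \<le> norm (b x * q^(m*K x)) / (1 - norm q ^ K x)" by simp
  qed
  have joint: "(\<lambda>y. norm ((\<lambda>(x,k). g k x) y)) summable_on (X \<times> UNIV)"
    apply (rule Infinite_Sum.abs_summable_on_Sigma_iff[THEN iffD2])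
  proof (intro conjI ballI)
    fix x assume "x \<in> X"
    then show "(\<lambda>k. norm ((\<lambda>(x,k). g k x) (x, k))) summable_on UNIV"
      using innern by (auto simp: summable_on_def)
  next
    have "(\<lambda>x. norm (infsum (\<lambda>k. norm ((\<lambda>(x,k). g k x) (x, k))) UNIV)) summable_on X
          \<longleftrightarrow> (\<lambda>x. norm (b x * q^(m*K x)) / (1 - norm q ^ K x)) summable_on X"
    proof (rule summable_on_cong)
      fix x assume x: "x \<in> X"
      have "norm q ^ K x < 1" using nq[OF x] by (simp add: norm_power)
      then show "norm (infsum (\<lambda>k. norm ((\<lambda>(x,k). g k x) (x, k))) UNIV) =
            norm (b x * q^(m*K x)) / (1 - norm q ^ K x)"
        using infsumI[OF innern[OF x]] by simp
    qed
    then show "(\<lambda>x. norm (infsum (\<lambda>k. norm ((\<lambda>(x,k). g k x) (x, k))) UNIV)) summable_on X"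
      using bnd by simp
  qed
  then obtain S where hs: "((\<lambda>(x,k). g k x) has_sum S) (X \<times> UNIV)"
    using abs_summable_summable by (metis summable_on_def)
  have A: "((\<lambda>x. b x * q^(m*K x) / (1 - q^K x)) has_sum S) X"
    using has_sum_Sigma'[OF hs] inner by simp
  have "((\<lambda>(k,x). g k x) has_sum S) (UNIV \<times> X)"
    using hs has_sum_swap[where f="\<lambda>(x,k). g k x" and S=S and A=X and B=UNIV] by (simp add: case_prod_unfold)
  hence "((\<lambda>k. f (q^(m+k))) has_sum S) UNIV"
    using has_sum_Sigma'[where f="\<lambda>(k,x). g k x" and a=S and A=UNIV and B="\<lambda>_. X"] h unfolding g_def by simp
  hence "(\<Sum>k. f (q^(m+k))) = S" using has_sum_imp_sums sums_unique by metis
  with A show ?thesis by simp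
qed


definition rep :: "complex \<Rightarrow> nat \<Rightarrow> (complex \<Rightarrow> complex) \<Rightarrow> nat list set \<Rightarrow> (nat list \<Rightarrow> complex) \<Rightarrow> (nat list \<Rightarrow> nat) \<Rightarrow> bool" where
  "rep q n0 f X b K \<longleftrightarrow> (\<forall>n\<ge>n0. ((\<lambda>x. b x * q^(n * K x)) has_sum f (q^n)) X)"

lemma rep_cong:
  assumes "rep q n0 f X b K" "\<And>x. x \<in> X \<Longrightarrow> b x = b' x"
  shows "rep q n0 f X b' K"
  unfolding rep_def
proof (intro allI impI)
  fix n assume "n0 \<le> n"
  then have "((\<lambda>x. b x * q^(n * K x)) has_sum f (q^n)) X" using assms(1) unfolding rep_def by blast
  then show "((\<lambda>x. b' x * q^(n * K x)) has_sum f (q^n)) X"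
    by (rule has_sum_cong[THEN iffD1, rotated]) (simp add: assms(2))
qed

lemma rep_mono: "rep q 0 f X b K \<Longrightarrow> rep q 1 f X b K"
  unfolding rep_def by auto

lemma rep_R:
  assumes q: "norm q < 1" and K: "\<forall>x\<in>X. 1 \<le> K x" and r: "rep q 1 f X b K"
  shows "rep q 0 (Rop q f) X (\<lambda>x. b x * (q^K x / (1 - q^K x))) K"
  unfolding rep_def
proof (intro allI impI)
  fix n :: nat
  have h: "\<forall>k. ((\<lambda>x. b x * q^((Suc n+k) * K x)) has_sum f (q^(Suc n+k))) X"
    using r unfolding rep_def by auto
  have e: "Rop q f (q^n) = (\<Sum>k. f (q^(Suc n+k)))"
  proof -
    have "q ^ Suc k * q ^ n = q ^ (Suc n + k)" for k
      by (metis add_Suc add_Suc_shift add.commute power_add)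
    then show ?thesis unfolding Rop_def by (simp only:)
  qed
  show "((\<lambda>x. b x * (q^K x / (1 - q^K x)) * q^(n * K x)) has_sum Rop q f (q^n)) X"
    unfolding e using shift[OF q K h]
    by (rule has_sum_cong[THEN iffD1, rotated]) (simp add: power_add)
qed

lemma rep_P:
  assumes q: "norm q < 1" and K: "\<forall>x\<in>X. 1 \<le> K x" and r: "rep q n0 f X b K"
  shows "rep q n0 (Pop q f) X (\<lambda>x. b x * (1 / (1 - q^K x))) K"
  unfolding rep_def
proof (intro allI impI)
  fix n :: nat assume n: "n \<ge> n0"
  have h: "\<forall>k. ((\<lambda>x. b x * q^((n+k) * K x)) has_sum f (q^(n+k))) X"
    using r n unfolding rep_def by auto
  have e: "Pop q f (q^n) = (\<Sum>k. f (q^(n+k)))"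
  proof -
    have "q ^ k * q ^ n = q ^ (n + k)" for k
      by (metis add.commute power_add)
    then show ?thesis unfolding Pop_def by (simp only:)
  qed
  show "((\<lambda>x. b x * (1 / (1 - q^K x)) * q^(n * K x)) has_sum Pop q f (q^n)) X"
    unfolding e using shift[OF q K h]
    by (rule has_sum_cong[THEN iffD1, rotated]) simp
qed

lemma rep_Rpow1:
  assumes q: "norm q < 1" and K: "\<forall>x\<in>X. 1 \<le> K x" and r: "rep q 1 f X b K"
  shows "rep q 1 ((Rop q ^^ a) f) X (\<lambda>x. b x * (q^K x / (1 - q^K x))^a) K"
proof (induction a)
  case 0 then show ?case using r by simp
next
  case (Suc a)
  have "rep q 0 ((Rop q ^^ Suc a) f) X (\<lambda>x. b x * (q^K x / (1 - q^K x))^a * (q^K x / (1 - q^K x))) K"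
    using rep_R[OF q K Suc] by simp
  then show ?case by (intro rep_mono) (auto elim: rep_cong)
qed

lemma rep_Rpow0:
  assumes q: "norm q < 1" and K: "\<forall>x\<in>X. 1 \<le> K x" and r: "rep q 1 f X b K" and a: "1 \<le> a"
  shows "rep q 0 ((Rop q ^^ a) f) X (\<lambda>x. b x * (q^K x / (1 - q^K x))^a) K"
proof -
  obtain c where c: "a = Suc c" using a by (cases a) auto
  have "rep q 0 ((Rop q ^^ Suc c) f) X (\<lambda>x. b x * (q^K x / (1 - q^K x))^c * (q^K x / (1 - q^K x))) K"
    using rep_R[OF q K rep_Rpow1[OF q K r, of c]] by simp
  then show ?thesis unfolding c by (auto elim: rep_cong)
qed

lemma rep_Ppow:
  assumes q: "norm q < 1" and K: "\<forall>x\<in>X. 1 \<le> K x" and r: "rep q n0 f X b K"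
  shows "rep q n0 ((Pop q ^^ a) f) X (\<lambda>x. b x * (1 / (1 - q^K x))^a) K"
proof (induction a)
  case 0 then show ?case using r by simp
next
  case (Suc a)
  have "rep q n0 ((Pop q ^^ Suc a) f) X (\<lambda>x. b x * (1 / (1 - q^K x))^a * (1 / (1 - q^K x))) K"
    using rep_P[OF q K Suc] by simp
  then show ?case by (auto elim: rep_cong)
qed

definition good :: "complex \<Rightarrow> nat \<Rightarrow> ((complex \<Rightarrow> complex) \<Rightarrow> complex \<Rightarrow> complex) \<Rightarrow> nat \<Rightarrow> nat \<Rightarrow> bool" where
  "good q n0 op t s \<longleftrightarrow> (\<forall>f X b K. (\<forall>x\<in>X. 1 \<le> K x) \<longrightarrow> rep q 1 f X b K \<longrightarrow>
      rep q n0 (op f) X (\<lambda>x. b x * (q^(K x * t) / (1 - q^K x)^s)) K)"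

lemma good_mono: "good q 0 op t s \<Longrightarrow> good q 1 op t s"
  unfolding good_def using rep_mono by blast

lemma good_Rpow: assumes q: "norm q < 1" and a: "1 \<le> a" shows "good q 0 (Rop q ^^ a) a a"
  unfolding good_def
proof (intro allI impI)
  fix f X b K assume K: "\<forall>x\<in>X. 1 \<le> (K x::nat)" and r: "rep q 1 f X b K"
  show "rep q 0 ((Rop q ^^ a) f) X (\<lambda>x. b x * (q ^ (K x * a) / (1 - q ^ K x) ^ a)) K"
    using rep_Rpow0[OF q K r a] by (rule rep_cong) (simp add: power_divide power_mult)
qed

lemma good_R: assumes q: "norm q < 1" shows "good q 0 (Rop q) 1 1"
  unfolding good_def
proof (intro allI impI)
  fix f X b K assume K: "\<forall>x\<in>X. 1 \<le> (K x::nat)" and r: "rep q 1 f X b K"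
  show "rep q 0 (Rop q f) X (\<lambda>x. b x * (q ^ (K x * 1) / (1 - q ^ K x) ^ 1)) K"
    using rep_R[OF q K r] by (rule rep_cong) simp
qed

lemma good_RP1: assumes q: "norm q < 1" shows "good q 1 (Rop q ^^ a \<circ> Pop q) a (Suc a)"
  unfolding good_def
proof (intro allI impI)
  fix f X b K assume K: "\<forall>x\<in>X. 1 \<le> (K x::nat)" and r: "rep q 1 f X b K"
  show "rep q 1 ((Rop q ^^ a \<circ> Pop q) f) X (\<lambda>x. b x * (q ^ (K x * a) / (1 - q ^ K x) ^ Suc a)) K"
    using rep_Rpow1[OF q K rep_P[OF q K r], of a] unfolding comp_def
    by (rule rep_cong) (simp add: power_divide power_mult)
qed

lemma good_RP0: assumes q: "norm q < 1" and a: "1 \<le> a" shows "good q 0 (Rop q ^^ a \<circ> Pop q) a (Suc a)"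
  unfolding good_def
proof (intro allI impI)
  fix f X b K assume K: "\<forall>x\<in>X. 1 \<le> (K x::nat)" and r: "rep q 1 f X b K"
  show "rep q 0 ((Rop q ^^ a \<circ> Pop q) f) X (\<lambda>x. b x * (q ^ (K x * a) / (1 - q ^ K x) ^ Suc a)) K"
    using rep_Rpow0[OF q K rep_P[OF q K r] a] unfolding comp_def
    by (rule rep_cong) (simp add: power_divide power_mult)
qed

lemma good_PR: assumes q: "norm q < 1" shows "good q 0 (Pop q ^^ a \<circ> Rop q) 1 (Suc a)"
  unfolding good_def
proof (intro allI impI)
  fix f X b K assume K: "\<forall>x\<in>X. 1 \<le> (K x::nat)" and r: "rep q 1 f X b K"
  show "rep q 0 ((Pop q ^^ a \<circ> Rop q) f) X (\<lambda>x. b x * (q ^ (K x * 1) / (1 - q ^ K x) ^ Suc a)) K"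
    using rep_Ppow[OF q K rep_R[OF q K r], of a] unfolding comp_def
    by (rule rep_cong) (simp add: power_divide)
qed

lemma good_Ppow: assumes q: "norm q < 1" shows "good q 1 (Pop q ^^ a) 0 a"
  unfolding good_def
proof (intro allI impI)
  fix f X b K assume K: "\<forall>x\<in>X. 1 \<le> (K x::nat)" and r: "rep q 1 f X b K"
  show "rep q 1 ((Pop q ^^ a) f) X (\<lambda>x. b x * (q ^ (K x * 0) / (1 - q ^ K x) ^ a)) K"
    using rep_Ppow[OF q K r, of a] by (rule rep_cong) (simp add: power_divide)
qed


definition Dec :: "nat \<Rightarrow> nat list set" where
  "Dec d = {ks. length ks = d \<and> sorted_wrt (>) ks \<and> (\<forall>k\<in>set ks. 0 < k)}"

definition hd0 :: "nat list \<Rightarrow> nat" where "hd0 ks = (if ks = [] then 0 else hd ks)"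

lemma Dec_cons: "a # x \<in> Dec (Suc d) \<longleftrightarrow> x \<in> Dec d \<and> 0 < a \<and> (\<forall>y\<in>set x. y < a)"
  unfolding Dec_def by auto

lemma Dec_le_hd0: "x \<in> Dec d \<Longrightarrow> y \<in> set x \<Longrightarrow> y \<le> hd0 x"
  unfolding Dec_def hd0_def by (cases x) auto

lemma Dec_Suc_ex: "ks \<in> Dec (Suc d) \<Longrightarrow> \<exists>a x. ks = a # x"
  unfolding Dec_def by (cases ks) auto

lemma Dec_hd0_less: "a # x \<in> Dec (Suc d) \<Longrightarrow> hd0 x < a"
  unfolding Dec_def hd0_def by (cases x) auto

lemma Dec_0: "Dec 0 = {[]}" unfolding Dec_def by auto

lemma ystep:
  assumes q: "norm q < 1" and r: "rep q 1 g (Dec d) b hd0"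
  shows "rep q 1 (\<lambda>u. yfun u * g u) (Dec (Suc d)) (\<lambda>ks. b (tl ks)) hd0"
  unfolding rep_def
proof (intro allI impI)
  fix n :: nat assume n: "1 \<le> n"
  define z where "z = q ^ n"
  have nz: "norm z < 1" unfolding z_def norm_power using q n
    by (simp add: power_less_one_iff)
  have hg: "((\<lambda>x. b x * z ^ hd0 x) has_sum g z) (Dec d)"
    using r n unfolding rep_def z_def by (simp add: power_mult)
  have hgn: "(\<lambda>x. norm (b x * z ^ hd0 x)) summable_on (Dec d)"
    using hg summable_on_iff_abs_summable_on_complex[THEN iffD1] summable_on_def by blast
  define C where "C = infsum (\<lambda>x. norm (b x * z ^ hd0 x)) (Dec d)"
  have geo: "((\<lambda>j. z ^ j) has_sum (z / (1 - z))) {1..}" using has_sum_geometric_from_1[OF nz] .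
  have geon: "((\<lambda>j. norm z ^ j) has_sum (norm z / (1 - norm z))) {1..}"
    using has_sum_geometric_from_1[of "norm z"] nz by simp
  define h where "h = (\<lambda>(j::nat, x). z ^ j * (b x * z ^ hd0 x))"
  have joint: "(\<lambda>y. norm (h y)) summable_on ({1..} \<times> Dec d)"
    apply (rule Infinite_Sum.abs_summable_on_Sigma_iff[THEN iffD2])
  proof (intro conjI ballI)
    fix j :: nat
    show "(\<lambda>x. norm (h (j, x))) summable_on Dec d"
      unfolding h_def using summable_on_cmult_right[OF hgn, of "norm z ^ j"]
      by (simp add: norm_mult norm_power)
  next
    have "(\<lambda>j. norm (infsum (\<lambda>x. norm (h (j, x))) (Dec d))) summable_on {1..} \<longleftrightarrow>
          (\<lambda>j. norm z ^ j * C) summable_on {1..}"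
    proof (rule summable_on_cong)
      fix j :: nat assume "j \<in> {1..}"
      have "infsum (\<lambda>x. norm (h (j, x))) (Dec d) = infsum (\<lambda>x. norm z ^ j * norm (b x * z ^ hd0 x)) (Dec d)"
        unfolding h_def by (simp add: norm_mult norm_power)
      also have "\<dots> = norm z ^ j * C" unfolding C_def by (rule infsum_cmult_right) (use hgn in auto)
      moreover have "0 \<le> C" unfolding C_def by (rule infsum_nonneg) simp
      ultimately show "norm (infsum (\<lambda>x. norm (h (j, x))) (Dec d)) = norm z ^ j * C"
        by (simp add: abs_mult)
    qed
    moreover have "(\<lambda>j. norm z ^ j * C) summable_on {1..}"
      using summable_on_cmult_left geon summable_on_def by blast
    ultimately show "(\<lambda>j. norm (infsum (\<lambda>x. norm (h (j, x))) (Dec d))) summable_on {1..}" by simp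
  qed
  then obtain S where hs: "(h has_sum S) ({1..} \<times> Dec d)"
    using abs_summable_summable by (metis summable_on_def)
  have "((\<lambda>j. z ^ j * g z) has_sum S) {1..}"
    using has_sum_Sigma'[OF hs] has_sum_cmult_right[OF hg] unfolding h_def by simp
  moreover have "((\<lambda>j. z ^ j * g z) has_sum (z / (1 - z) * g z)) {1..}"
    using has_sum_cmult_left[OF geo] .
  ultimately have S: "S = yfun z * g z" unfolding yfun_def using has_sum_unique by blast
  have "(h has_sum S) ({1..} \<times> Dec d) = ((\<lambda>ks. b (tl ks) * q ^ (n * hd0 ks)) has_sum S) (Dec (Suc d))"
  proof (rule has_sum_reindex_bij_witness[where j="\<lambda>(a,x). (hd0 x + a) # x" and i="\<lambda>ks. (hd ks - hd0 (tl ks), tl ks)"])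
    fix p assume "p \<in> {1::nat..} \<times> Dec d"
    then obtain a x where p: "p = (a, x)" "1 \<le> a" "x \<in> Dec d" by auto
    then show "(\<lambda>ks. (hd ks - hd0 (tl ks), tl ks)) ((\<lambda>(a,x). (hd0 x + a) # x) p) = p" by simp
    show "(\<lambda>(a,x). (hd0 x + a) # x) p \<in> Dec (Suc d)"
      using p Dec_le_hd0[OF p(3)] by (auto simp: Dec_cons intro: le_less_trans[of _ "hd0 x"])
    show "b (tl ((\<lambda>(a,x). (hd0 x + a) # x) p)) * q ^ (n * hd0 ((\<lambda>(a,x). (hd0 x + a) # x) p)) = h p"
      using p unfolding h_def z_def hd0_def
      by (simp add: power_add power_mult[symmetric] algebra_simps)
  next
    fix ks assume ks: "ks \<in> Dec (Suc d)"
    then obtain a x where kx: "ks = a # x" using Dec_Suc_ex by blast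
    have lt: "hd0 x < a" using Dec_hd0_less ks kx by blast
    show "(\<lambda>(a,x). (hd0 x + a) # x) ((\<lambda>ks. (hd ks - hd0 (tl ks), tl ks)) ks) = ks"
      using kx lt by simp
    show "(\<lambda>ks. (hd ks - hd0 (tl ks), tl ks)) ks \<in> {1..} \<times> Dec d"
      using kx lt ks by (auto simp: Dec_cons)
  qed simp
  with hs S show "((\<lambda>ks. b (tl ks) * q ^ (n * hd0 ks)) has_sum (yfun (q^n) * g (q^n))) (Dec (Suc d))"
    unfolding z_def by simp
qed


definition cf :: "complex \<Rightarrow> nat list \<Rightarrow> nat list \<Rightarrow> nat list \<Rightarrow> complex" where
  "cf q ts ss ks = (\<Prod>j<length ss. q ^ (ks ! j * ts ! j) / (1 - q ^ (ks ! j)) ^ (ss ! j))"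

lemma cf_cons: "cf q (t#ts) (s#ss) (k#x) = cf q ts ss x * (q^(k*t) / (1 - q^k)^s)"
  unfolding cf_def length_Cons prod.lessThan_Suc_shift nth_Cons_0 nth_Cons_Suc by (simp add: mult.commute)

lemma step:
  assumes q: "norm q < 1" and r: "rep q 1 g (Dec d) b hd0" and gd: "good q n0 op t s"
  shows "rep q n0 (op (\<lambda>u. yfun u * g u)) (Dec (Suc d))
           (\<lambda>ks. b (tl ks) * (q^(hd0 ks * t) / (1 - q^hd0 ks)^s)) hd0"
proof -
  have K: "\<forall>x\<in>Dec (Suc d). 1 \<le> hd0 x"
  proof
    fix x assume x: "x \<in> Dec (Suc d)"
    then obtain a y where "x = a # y" using Dec_Suc_ex by blast
    with x show "1 \<le> hd0 x" by (auto simp: Dec_cons hd0_def)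
  qed
  show ?thesis using gd K ystep[OF q r] unfolding good_def by blast
qed

lemma nest_rep:
  assumes q: "norm q < 1"
  shows "length ts = length ops \<Longrightarrow> length ss = length ops \<Longrightarrow>
    (\<forall>j<length ops. good q 1 (ops!j) (ts!j) (ss!j)) \<Longrightarrow>
    rep q 1 (nest ops) (Dec (length ops)) (cf q ts ss) hd0"
proof (induction ops arbitrary: ts ss)
  case Nil
  then show ?case unfolding rep_def cf_def by (auto simp: hd0_def Dec_0 intro!: has_sum_finiteI)
next
  case (Cons op ops)
  obtain t ts' where ts: "ts = t # ts'" using Cons.prems(1) by (cases ts) auto
  obtain s ss' where ss: "ss = s # ss'" using Cons.prems(2) by (cases ss) auto
  have IH: "rep q 1 (nest ops) (Dec (length ops)) (cf q ts' ss') hd0"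
  proof (rule Cons.IH)
    show "length ts' = length ops" "length ss' = length ops" using Cons.prems ts ss by auto
    show "\<forall>j<length ops. good q 1 (ops!j) (ts'!j) (ss'!j)"
    proof (intro allI impI)
      fix j assume "j < length ops"
      then show "good q 1 (ops!j) (ts'!j) (ss'!j)" using Cons.prems(3) ts ss
        by (metis Suc_less_eq length_Cons nth_Cons_Suc)
    qed
  qed
  have gd: "good q 1 op t s" using Cons.prems(3) ts ss by auto
  have "rep q 1 (nest (op # ops)) (Dec (Suc (length ops)))
           (\<lambda>ks. cf q ts' ss' (tl ks) * (q^(hd0 ks * t) / (1 - q^hd0 ks)^s)) hd0"
    using step[OF q IH gd] by simp
  then show ?case unfolding length_Cons
  proof (rule rep_cong)
    fix x assume "x \<in> Dec (Suc (length ops))"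
    then obtain a y where "x = a # y" using Dec_Suc_ex by blast
    then show "cf q ts' ss' (tl x) * (q ^ (hd0 x * t) / (1 - q ^ hd0 x) ^ s) = cf q ts ss x"
      unfolding ts ss by (simp add: cf_cons hd0_def)
  qed
qed

lemma top2:
  assumes q: "norm q < 1" and ne: "ops \<noteq> []" and lt: "length ts = length ops" and ls: "length ss = length ops"
    and g0: "good q 0 (ops!0) (ts!0) (ss!0)"
    and ga: "\<forall>j<length ops. good q 1 (ops!j) (ts!j) (ss!j)"
  shows "nest ops 1 = qmzv_frak q ts ss"
proof -
  obtain op ops' where o: "ops = op # ops'" using ne by (cases ops) auto
  obtain t ts' where ts: "ts = t # ts'" using lt o by (cases ts) auto
  obtain s ss' where ss: "ss = s # ss'" using ls o by (cases ss) auto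
  have IH: "rep q 1 (nest ops') (Dec (length ops')) (cf q ts' ss') hd0"
    apply (rule nest_rep[OF q])
    using lt ls ga o ts ss by auto
  have gd: "good q 0 op t s" using g0 o ts ss by simp
  have "rep q 0 (nest (op # ops')) (Dec (Suc (length ops')))
           (\<lambda>ks. cf q ts' ss' (tl ks) * (q^(hd0 ks * t) / (1 - q^hd0 ks)^s)) hd0"
    using step[OF q IH gd] by simp
  then have "rep q 0 (nest ops) (Dec (length ss))
           (\<lambda>ks. cf q ts' ss' (tl ks) * (q^(hd0 ks * t) / (1 - q^hd0 ks)^s)) hd0"
    using o ls by simp
  then have "rep q 0 (nest ops) (Dec (length ss)) (cf q ts ss) hd0"
  proof (rule rep_cong)
    fix x assume "x \<in> Dec (length ss)"
    then have "x \<in> Dec (Suc (length ss'))" using ss by simp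
    then obtain a y where "x = a # y" using Dec_Suc_ex by blast
    then show "cf q ts' ss' (tl x) * (q ^ (hd0 x * t) / (1 - q ^ hd0 x) ^ s) = cf q ts ss x"
      unfolding ts ss by (simp add: cf_cons hd0_def)
  qed
  then have "((cf q ts ss) has_sum nest ops 1) (Dec (length ss))"
    unfolding rep_def by (metis (no_types, lifting) has_sum_cong le0 mult.right_neutral mult_0 power_0)
  then show ?thesis unfolding qmzv_frak_def Dec_def cf_def by (simp add: infsumI)
qed


lemma gRP1: "norm q < 1 \<Longrightarrow> 1 \<le> sj \<Longrightarrow> good q 1 (Rop q ^^ (sj - 1) \<circ> Pop q) (sj - 1) sj"
  using good_RP1[of q "sj - 1"] by simp

lemma gRP0: "norm q < 1 \<Longrightarrow> 2 \<le> sj \<Longrightarrow> good q 0 (Rop q ^^ (sj - 1) \<circ> Pop q) (sj - 1) sj"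
  using good_RP0[of q "sj - 1"] by simp

lemma gPR: "norm q < 1 \<Longrightarrow> 1 \<le> sj \<Longrightarrow> good q 0 (Pop q ^^ (sj - 1) \<circ> Rop q) 1 sj"
  using good_PR[of q "sj - 1"] by simp

lemma g1R: "norm q < 1 \<Longrightarrow> Suc 0 \<le> a \<Longrightarrow> good q (Suc 0) (Rop q ^^ a) a a"
  using good_mono[OF good_Rpow[of q a]] by simp

lemma g1RP: "norm q < 1 \<Longrightarrow> Suc 0 \<le> sj \<Longrightarrow> good q (Suc 0) (Rop q ^^ (sj - Suc 0) \<circ> Pop q) (sj - Suc 0) sj"
  using gRP1[of q sj] by simp

lemma g1P: "norm q < 1 \<Longrightarrow> good q (Suc 0) (Pop q ^^ a) 0 a"
  using good_Ppow[of q a] by simp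

lemma g1RR: "norm q < 1 \<Longrightarrow> good q (Suc 0) (Rop q) (Suc 0) (Suc 0)"
  using good_mono[OF good_R[of q]] by simp

theorem corollary6p4:
  fixes q :: complex and s :: "nat list"
  assumes "norm q < 1" and "s \<noteq> []" and "\<forall>sj\<in>set s. 1 \<le> sj"
  shows "(qmzv_frak q (tII s) s = FII q s 1 \<and>
          qmzv q (tII s) s = (1 - q) ^ sum_list s * FII q s 1) \<and>
         (qmzv_frak q (tIII s) s = FIII q s 1 \<and>
          qmzv q (tIII s) s = (1 - q) ^ sum_list s * FIII q s 1) \<and>
         (2 \<le> hd s \<longrightarrow>
           qmzv_frak q (tI s) s = FI q s 1 \<and>
           qmzv q (tI s) s = (1 - q) ^ sum_list s * FI q s 1) \<and>
         (2 \<le> hd s \<longrightarrow>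
           qmzv_frak q (tIV s) s = FIV q s 1 \<and>
           qmzv q (tIV s) s = (1 - q) ^ sum_list s * FIV q s 1) \<and>
         (\<forall>J. J \<subseteq> {..<length s} \<longrightarrow> (0 \<in> J \<or> 2 \<le> hd s) \<longrightarrow>
           qmzv_frak q (tIreg J s) (sIreg J s) = FIreg q J s 1) \<and>
         qmzv_frak q (1 # tl s) (1 # tl s) = FIVreg q s 1"
proof -
  note q = assms(1)
  obtain s0 r where s: "s = s0 # r" using assms(2) by (cases s) auto
  have s0: "1 \<le> s0" using assms(3) s by simp
  have rj: "\<And>i. i < length r \<Longrightarrow> 1 \<le> r ! i" using assms(3) s nth_mem by fastforce
  have sj: "\<And>j. j < length s \<Longrightarrow> 1 \<le> s ! j" using assms(3) nth_mem by blast
  have II: "FII q s 1 = qmzv_frak q (tII s) s"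
    unfolding FII_def tII_def s
  proof (rule top2[OF q])
    show "good q 0 (map (\<lambda>sj. Rop q ^^ sj) (s0 # r) ! 0) ((s0 # r) ! 0) ((s0 # r) ! 0)"
      using good_Rpow[OF q s0] by simp
    show "\<forall>j<length (map (\<lambda>sj. Rop q ^^ sj) (s0 # r)).
      good q 1 (map (\<lambda>sj. Rop q ^^ sj) (s0 # r) ! j) ((s0 # r) ! j) ((s0 # r) ! j)"
      unfolding length_map length_Cons All_less_Suc2
      using s0 rj by (auto intro!: g1R[OF q])
  qed simp_all
  have III: "FIII q s 1 = qmzv_frak q (tIII s) s"
    unfolding FIII_def tIII_def s
  proof (rule top2[OF q])
    show "good q 0 ((((Pop q ^^ (hd (s0 # r) - 1)) \<circ> Rop q) # map (\<lambda>sj. Pop q ^^ sj) (tl (s0 # r))) ! 0)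
         ((1 # replicate (length (s0 # r) - 1) 0) ! 0) ((s0 # r) ! 0)"
      using gPR[OF q s0] by simp
    show "\<forall>j<length (((Pop q ^^ (hd (s0 # r) - 1)) \<circ> Rop q) # map (\<lambda>sj. Pop q ^^ sj) (tl (s0 # r))).
      good q 1 ((((Pop q ^^ (hd (s0 # r) - 1)) \<circ> Rop q) # map (\<lambda>sj. Pop q ^^ sj) (tl (s0 # r))) ! j)
        ((1 # replicate (length (s0 # r) - 1) 0) ! j) ((s0 # r) ! j)"
      unfolding length_Cons All_less_Suc2
      using good_mono[OF gPR[OF q s0]] good_Ppow[OF q] by simp
  qed simp_all
  have I: "FI q s 1 = qmzv_frak q (tI s) s" if h: "2 \<le> hd s"
    unfolding FI_def tI_def s
  proof (rule top2[OF q])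
    show "good q 0 (map (\<lambda>sj. (Rop q ^^ (sj - 1)) \<circ> Pop q) (s0 # r) ! 0)
         (map (\<lambda>sj. sj - 1) (s0 # r) ! 0) ((s0 # r) ! 0)"
      using gRP0[OF q, of s0] h s by simp
    show "\<forall>j<length (map (\<lambda>sj. (Rop q ^^ (sj - 1)) \<circ> Pop q) (s0 # r)).
      good q 1 (map (\<lambda>sj. (Rop q ^^ (sj - 1)) \<circ> Pop q) (s0 # r) ! j)
        (map (\<lambda>sj. sj - 1) (s0 # r) ! j) ((s0 # r) ! j)"
      unfolding length_map length_Cons All_less_Suc2
      using s0 rj by (auto intro!: g1RP[OF q])
  qed simp_all
  have IV: "FIV q s 1 = qmzv_frak q (tIV s) s" if h: "2 \<le> hd s"
    unfolding FIV_def tIV_def s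
  proof (rule top2[OF q])
    show "good q 0 ((((Rop q ^^ (hd (s0 # r) - 1)) \<circ> Pop q) # map (\<lambda>sj. Rop q ^^ sj) (tl (s0 # r))) ! 0)
         (((hd (s0 # r) - 1) # tl (s0 # r)) ! 0) ((s0 # r) ! 0)"
      using gRP0[OF q, of s0] h s by simp
    show "\<forall>j<length (((Rop q ^^ (hd (s0 # r) - 1)) \<circ> Pop q) # map (\<lambda>sj. Rop q ^^ sj) (tl (s0 # r))).
      good q 1 ((((Rop q ^^ (hd (s0 # r) - 1)) \<circ> Pop q) # map (\<lambda>sj. Rop q ^^ sj) (tl (s0 # r))) ! j)
        (((hd (s0 # r) - 1) # tl (s0 # r)) ! j) ((s0 # r) ! j)"
      unfolding length_Cons All_less_Suc2
      using good_mono[OF gRP0[OF q, of s0]] h s rj by (auto intro!: g1R[OF q])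
  qed simp_all
  have Ireg: "FIreg q J s 1 = qmzv_frak q (tIreg J s) (sIreg J s)" if h: "0 \<in> J \<or> 2 \<le> hd s" for J
    unfolding FIreg_def tIreg_def sIreg_def
  proof (rule top2[OF q])
    show "map (\<lambda>j. if j \<in> J then Rop q else (Rop q ^^ (s ! j - 1)) \<circ> Pop q) [0..<length s] \<noteq> []"
      using assms(2) by simp
    show "good q 0 (map (\<lambda>j. if j \<in> J then Rop q else (Rop q ^^ (s ! j - 1)) \<circ> Pop q) [0..<length s] ! 0)
         (map (\<lambda>j. if j \<in> J then 1 else s ! j - 1) [0..<length s] ! 0)
         (map (\<lambda>j. if j \<in> J then 1 else s ! j) [0..<length s] ! 0)"
    proof -
      have L: "0 < length s" using assms(2) by simp
      have "hd s = s ! 0" using assms(2) by (simp add: hd_conv_nth)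
      then show ?thesis
        using L h good_R[OF q] gRP0[OF q, of "s ! 0"] by (auto simp del: upt_Suc)
    qed
    show "\<forall>j<length (map (\<lambda>j. if j \<in> J then Rop q else (Rop q ^^ (s ! j - 1)) \<circ> Pop q) [0..<length s]).
      good q 1 (map (\<lambda>j. if j \<in> J then Rop q else (Rop q ^^ (s ! j - 1)) \<circ> Pop q) [0..<length s] ! j)
         (map (\<lambda>j. if j \<in> J then 1 else s ! j - 1) [0..<length s] ! j)
         (map (\<lambda>j. if j \<in> J then 1 else s ! j) [0..<length s] ! j)"
      using sj good_mono[OF good_R[OF q]] gRP1[OF q] by auto
  qed simp_all
  have IVreg: "FIVreg q s 1 = qmzv_frak q (1 # tl s) (1 # tl s)"
    unfolding FIVreg_def s
  proof (rule top2[OF q])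
    show "good q 0 ((Rop q # map (\<lambda>sj. Rop q ^^ sj) (tl (s0 # r))) ! 0)
         ((1 # tl (s0 # r)) ! 0) ((1 # tl (s0 # r)) ! 0)"
      using good_R[OF q] by simp
    show "\<forall>j<length (Rop q # map (\<lambda>sj. Rop q ^^ sj) (tl (s0 # r))).
      good q 1 ((Rop q # map (\<lambda>sj. Rop q ^^ sj) (tl (s0 # r))) ! j)
        ((1 # tl (s0 # r)) ! j) ((1 # tl (s0 # r)) ! j)"
      unfolding length_Cons All_less_Suc2
      using good_mono[OF good_R[OF q]] rj by (auto intro!: g1R[OF q])
  qed simp_all
  show ?thesis using II III I IV Ireg IVreg by (simp add: qmzv_def)
qed

end
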